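(* Let $K\ge 2$ and consider the multivariate multiple linear regression model $\mathbf{Y} = \mathbf{X}\boldsymbol{\beta}' + \boldsymbol{\mathcal{E}}$, where $\mathbf{Y}$ is an $n\times K$ matrix of traits, $\mathbf{X}$ is an $n\times 1$ genotype vector, $\boldsymbol{\beta}'=(\beta_1,\dots,\beta_K)$ is the vector of genetic effects, and $\mathrm{vec}(\boldsymbol{\mathcal{E}})\sim N_{nK}(\mathbf{0},\mathbf{I}_n\otimes\boldsymbol{\Sigma})$ with $\boldsymbol{\Sigma}=\sigma^2\big((1-\rho)\mathbf{I}_K+\rho\mathbf{1}\mathbf{1}'\big)$, $\sigma^2>0$, and $\rho>0$ such that $\boldsymbol{\Sigma}$ is positive definite. Assume the genetic effects of the associated traits are equal in size and positive (i.e. every nonzero $\beta_k$ equals a common value $b>0$). Consider two scenarios: "partial association", in which exactly $u<K$ of the $\beta_k$ are nonzero, and "complete association", in which all $K$ of the $\beta_k$ are nonzero. For testing $H_0:\boldsymbol{\beta}=\mathbf{0}$ with the MANOVA test, the power under partial association is asymptotically larger than the power under complete association if $$\frac{u}{K} > \frac{1-\rho}{1+(K-u-1)\rho},$$ where the right-hand side equals the ratio of the second-largest to the largest eigenvalue of $\boldsymbol{\Sigma}_{K-u}$, the $(K-u)\times(K-u)$ compound-symmetry covariance matrix $\sigma^2((1-\rho)\mathbf{I}_{K-u}+\rho\mathbf{1}\mathbf{1}')$ of the $K-u$ truly unassociated traits.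
   Context: $\mathbf{Y}$ and $\mathbf{X}$ are centered. The MANOVA test (Wilks' lambda, equivalent to the likelihood ratio test under the model) of $H_0:\boldsymbol{\beta}=\mathbf{0}$ uses the statistic $-n\log\big(|\mathbf{E}|/|\mathbf{H}+\mathbf{E}|\big)$, where $\hat{\boldsymbol{\beta}}=\mathbf{Y}'\mathbf{X}(\mathbf{X}'\mathbf{X})^{-1}$, $\mathbf{H}=\hat{\boldsymbol{\beta}}(\mathbf{X}'\mathbf{X})\hat{\boldsymbol{\beta}}'$ is the hypothesis sum-of-squares-and-cross-products matrix and $\mathbf{E}=\mathbf{Y}'\mathbf{Y}-\hat{\boldsymbol{\beta}}(\mathbf{X}'\mathbf{X})\hat{\boldsymbol{\beta}}'$ the error one; under $H_0$ it is approximately $\chi^2_K$ for large $n$, and the test rejects for large values. "Asymptotically" refers to the large-sample ($n\to\infty$) approximation of the power. *)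

theory Defs
  imports "HOL-Probability.Probability"
begin

definition cs_cov :: "real \<Rightarrow> real \<Rightarrow> real^'k^'k" where
  "cs_cov sigma2 rho = (\<chi> i j. sigma2 * ((1 - rho) * (if i = j then 1 else 0) + rho))"

definition pos_def_mat :: "real^'k^'k \<Rightarrow> bool" where
  "pos_def_mat A \<longleftrightarrow> transpose A = A \<and> (\<forall>x. x \<noteq> 0 \<longrightarrow> x \<bullet> (A *v x) > 0)"

text \<open>Noncentrality parameter of the (asymptotic) MANOVA / LRT statistic for
  H0: beta = 0 in the model Y = X beta' + E, with centered genotype vector X
  having sum of squares sxx = X'X:  lambda = X'X * beta' Sigma^{-1} beta.\<close>
definition manova_ncp :: "real \<Rightarrow> real^'k^'k \<Rightarrow> real^'k \<Rightarrow> real" where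
  "manova_ncp sxx Sig beta = sxx * (beta \<bullet> (matrix_inv Sig *v beta))"

text \<open>Tail probability P(chi^2_K(lambda) > c) of the noncentral chi-square
  distribution with K degrees of freedom and noncentrality lambda, realised as
  the law of sum_i (Z_i + mu_i)^2 with Z_i iid N(0,1) and |mu|^2 = lambda.\<close>
definition ncchisq_tail :: "nat \<Rightarrow> real \<Rightarrow> real \<Rightarrow> real" where
  "ncchisq_tail K lam c =
     (let M = PiM {..<K} (\<lambda>_. density lborel std_normal_density)
      in measure M {z \<in> space M. (\<Sum>i<K. (z i + (if i = 0 then sqrt lam else 0))^2) > c})"

text \<open>Asymptotic (large n) power of the MANOVA test with critical value c:
  the statistic is approximately chi^2_K(lambda) under the alternative.\<close>
definition manova_asym_power :: "real \<Rightarrow> real^'k^'k \<Rightarrow> real^'k \<Rightarrow> real \<Rightarrow> real" where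
  "manova_asym_power sxx Sig beta c = ncchisq_tail CARD('k) (manova_ncp sxx Sig beta) c"

end

theory Submission
  imports Defs
begin


lemma phi_cont: "continuous_on S std_normal_density"
  unfolding normal_density_def by (intro continuous_intros) auto

lemma G_deriv:
  assumes "lo < x" "x < hi"
  shows "((\<lambda>y. integral {lo..y} std_normal_density) has_real_derivative std_normal_density x) (at x)"
proof -
  have "((\<lambda>y. integral {lo..y} std_normal_density) has_real_derivative std_normal_density x) (at x within {lo..hi})"
    by (rule integral_has_real_derivative) (use assms phi_cont in auto)
  moreover have "x \<in> interior {lo..hi}" using assms by (simp only: interior_atLeastAtMost_real greaterThanLessThan_iff)
  ultimately show ?thesis using at_within_interior by metis
qed

definition Fn :: "real \<Rightarrow> real \<Rightarrow> real" where
  "Fn s a = integral {-s-a..s-a} std_normal_density"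

lemma phi_less:
  assumes "s > 0" "a > 0"
  shows "std_normal_density (-s-a) < std_normal_density (s-a)"
proof -
  have "(s-a)^2 < (-s-a)^2" using assms by (simp add: power2_eq_square algebra_simps)
  hence "exp (-((-s-a)^2)/2) < exp (-((s-a)^2)/2)" by simp
  thus ?thesis unfolding std_normal_density_def by (simp add: divide_strict_right_mono)
qed

lemma Fn_strict:
  assumes "s > 0" "0 \<le> a2" "a2 < a1"
  shows "Fn s a1 < Fn s a2"
proof -
  define lo where "lo = -s-a1-1"
  define hi where "hi = s+1"
  define G where "G y = integral {lo..y} std_normal_density" for y
  define H where "H a = G (s-a) - G (-s-a)" for a
  have HF: "H a = Fn s a" if "0 \<le> a" "a \<le> a1" for a
  proof -
    have i: "std_normal_density integrable_on {lo..s-a}"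
      by (rule integrable_continuous_real) (rule phi_cont)
    have "lo \<le> -s-a" "-s-a \<le> s-a" using that assms unfolding lo_def by auto
    from Henstock_Kurzweil_Integration.integral_combine[OF this i]
    show ?thesis unfolding H_def G_def Fn_def by simp
  qed
  have HD: "(H has_real_derivative (std_normal_density (-s-a) - std_normal_density (s-a))) (at a)"
    if "-1 < a" "a < a1 + 1" for a
  proof -
    have l1: "lo < s-a" "s-a < hi" "lo < -s-a" "-s-a < hi"
      using that assms unfolding lo_def hi_def by auto
    have d1: "(G has_real_derivative std_normal_density (s-a)) (at (s-a))"
      unfolding G_def by (rule G_deriv[OF l1(1,2)])
    have d2: "(G has_real_derivative std_normal_density (-s-a)) (at (-s-a))"
      unfolding G_def by (rule G_deriv[OF l1(3,4)])
    have i1: "((\<lambda>a. s-a) has_real_derivative (0 - 1)) (at a)"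
      by (rule DERIV_diff[OF DERIV_const DERIV_ident])
    have i2: "((\<lambda>a. -s-a) has_real_derivative (0 - 1)) (at a)"
      by (rule DERIV_diff[OF DERIV_const DERIV_ident])
    have e1: "((\<lambda>a. G (s-a)) has_real_derivative std_normal_density (s-a) * (0-1)) (at a)"
      using DERIV_chain2[OF d1 i1] .
    have e2: "((\<lambda>a. G (-s-a)) has_real_derivative std_normal_density (-s-a) * (0-1)) (at a)"
      using DERIV_chain2[OF d2 i2] .
    show ?thesis unfolding H_def using DERIV_diff[OF e1 e2] by simp
  qed
  have "H a1 < H a2"
  proof (rule DERIV_neg_imp_decreasing_open[OF assms(3)])
    fix x assume x: "a2 < x" "x < a1"
    have "-1 < x" "x < a1 + 1" using x assms by auto
    note HD[OF this]
    moreover have "std_normal_density (-s-x) - std_normal_density (s-x) < 0"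
      using phi_less[of s x] x assms by simp
    ultimately show "\<exists>y. DERIV H x :> y \<and> y < 0" by blast
  next
    have "\<forall>x. a2 \<le> x \<and> x \<le> a1 \<longrightarrow> isCont H x"
    proof (intro allI impI)
      fix x assume "a2 \<le> x \<and> x \<le> a1"
      hence "-1 < x" "x < a1 + 1" using assms by auto
      from HD[OF this] show "isCont H x" by (rule DERIV_isCont)
    qed
    thus "continuous_on {a2..a1} H"
      by (intro continuous_at_imp_continuous_on) auto
  qed
  moreover have "H a1 = Fn s a1" by (rule HF) (use assms in auto)
  moreover have "H a2 = Fn s a2" by (rule HF) (use assms in auto)
  ultimately show ?thesis by simp
qed


definition Nd :: "real measure" where
  "Nd = density lborel (\<lambda>x. ennreal (std_normal_density x))"

lemma Nd_prob: "prob_space Nd"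
  unfolding Nd_def by (rule prob_space_normal_density) simp

lemma sets_Nd[simp, measurable_cong]: "sets Nd = sets borel"
  unfolding Nd_def by simp

lemma space_Nd[simp]: "space Nd = UNIV"
  unfolding Nd_def by simp

lemma Nd_interval:
  assumes "\<alpha> \<le> \<beta>"
  shows "emeasure Nd {\<alpha>..\<beta>} = ennreal (integral {\<alpha>..\<beta>} std_normal_density)"
proof -
  have "emeasure Nd {\<alpha>..\<beta>} = (\<integral>\<^sup>+ x. ennreal (std_normal_density x) * indicator {\<alpha>..\<beta>} x \<partial>lborel)"
    unfolding Nd_def by (rule emeasure_density) auto
  also have "\<dots> = ennreal (integral {\<alpha>..\<beta>} std_normal_density)"
    by (rule nn_integral_has_integral_lebesgue') (auto intro!: integrable_integral integrable_continuous_real phi_cont)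
  finally show ?thesis .
qed

definition hr :: "real \<Rightarrow> real \<Rightarrow> real" where
  "hr a t = measure Nd {y. (y + a)^2 \<le> t}"

lemma hr_set_pos:
  assumes "t > 0"
  shows "{y::real. (y + a)^2 \<le> t} = {-sqrt t - a..sqrt t - a}"
proof -
  have iff: "(y + a)^2 \<le> t \<longleftrightarrow> \<bar>y + a\<bar> \<le> sqrt t" for y
  proof -
    have e: "\<bar>sqrt t\<bar> = sqrt t" using assms by simp
    have "\<bar>y+a\<bar> \<le> sqrt t \<longleftrightarrow> (y+a)^2 \<le> (sqrt t)^2"
      using abs_le_square_iff[of "y+a" "sqrt t"] e by simp
    also have "(sqrt t)^2 = t" using assms by simp
    finally show ?thesis by simp
  qed
  show ?thesis
  proof (rule set_eqI)
    fix y
    show "y \<in> {y::real. (y + a)^2 \<le> t} \<longleftrightarrow> y \<in> {-sqrt t - a..sqrt t - a}"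
      unfolding mem_Collect_eq atLeastAtMost_iff iff abs_le_iff by linarith
  qed
qed

lemma hr_pos:
  assumes "t > 0"
  shows "hr a t = Fn (sqrt t) a"
proof -
  interpret prob_space Nd by (rule Nd_prob)
  have "ennreal (hr a t) = emeasure Nd {-sqrt t - a..sqrt t - a}"
    unfolding hr_def hr_set_pos[OF assms] by (simp add: emeasure_eq_measure)
  also have "\<dots> = ennreal (Fn (sqrt t) a)"
    unfolding Fn_def by (rule Nd_interval) (use assms in simp)
  finally show ?thesis unfolding hr_def Fn_def
    by (subst (asm) ennreal_inj) (auto intro!: integral_nonneg integrable_continuous_real phi_cont)
qed

lemma hr_nonpos:
  assumes "t \<le> 0"
  shows "hr a t = 0"
proof (cases "t = 0")
  case True
  interpret prob_space Nd by (rule Nd_prob)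
  have "{y::real. (y + a)^2 \<le> t} = {-a..-a}" using True by auto
  hence "ennreal (hr a t) = emeasure Nd {-a..-a}"
    unfolding hr_def by (simp add: emeasure_eq_measure)
  also have "\<dots> = 0" by (subst Nd_interval) auto
  finally have "ennreal (hr a t) = 0" .
  thus ?thesis using measure_nonneg[of Nd "{y::real. (y+a)^2 \<le> t}"] unfolding hr_def
    by (simp add: ennreal_eq_0_iff)
next
  case False
  hence "{y::real. (y + a)^2 \<le> t} = {}" using assms
    by auto (smt (verit) zero_le_power2)
  thus ?thesis unfolding hr_def by simp
qed

lemma hr_mono: "mono (hr a)"
proof -
  interpret prob_space Nd by (rule Nd_prob)
  show ?thesis unfolding mono_def hr_def
    by (auto intro!: finite_measure_mono)
qed

lemma hr_strict:
  assumes "0 \<le> a2" "a2 < a1" "t > 0"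
  shows "hr a1 t < hr a2 t"
  using Fn_strict[of "sqrt t" a2 a1] assms by (simp add: hr_pos)

lemma hr_le:
  assumes "0 \<le> a2" "a2 < a1"
  shows "hr a1 t \<le> hr a2 t"
  using hr_strict[OF assms, of t] hr_nonpos[of t] by (cases "t > 0") auto


lemma hr_meas[measurable]: "hr a \<in> borel_measurable borel"
  by (rule borel_measurable_mono[OF hr_mono])

lemma main_prob:
  fixes K :: nat
  assumes K2: "K \<ge> 2" and c: "c > 0" and a: "0 \<le> a2" "a2 < a1"
  defines "M \<equiv> PiM {..<K} (\<lambda>_. Nd)"
  shows "measure M {z \<in> space M. c < (\<Sum>i<K. (z i + (if i = 0 then a2 else 0))^2)}
       < measure M {z \<in> space M. c < (\<Sum>i<K. (z i + (if i = 0 then a1 else 0))^2)}"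
proof -
  interpret N: prob_space Nd by (rule Nd_prob)
  interpret PS: product_sigma_finite "\<lambda>_::nat. Nd"
    by unfold_locales
  define I where "I = {1..<K}"
  have eqK: "{..<K} = insert 0 I" using K2 unfolding I_def by auto
  have finI: "finite I" and nI: "0 \<notin> I" unfolding I_def by auto
  have cardI: "card I = K - 1" unfolding I_def by simp
  have Ine: "I \<noteq> {}" using K2 unfolding I_def by auto
  define MI where "MI = PiM I (\<lambda>_::nat. Nd)"
  interpret PM: prob_space M unfolding M_def by (rule prob_space_PiM) (rule Nd_prob)
  interpret PMI: prob_space MI unfolding MI_def by (rule prob_space_PiM) (rule Nd_prob)
  define S where "S a z = (\<Sum>i<K. (z i + (if i = 0 then a else 0))^2)" for a and z :: "nat \<Rightarrow> real"
  define Q where "Q w = (\<Sum>i\<in>I. (w i)^2)" for w :: "nat \<Rightarrow> real"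
  define A where "A a = {z \<in> space M. S a z \<le> c}" for a
  have S_meas[measurable]: "S a \<in> borel_measurable M" for a
    unfolding S_def M_def by measurable
  have Q_meas[measurable]: "Q \<in> borel_measurable MI"
    unfolding Q_def MI_def by measurable
  have A_sets[measurable]: "A a \<in> sets M" for a
    unfolding A_def by measurable
  have S_upd: "S a (w(0:=y)) = (y + a)^2 + Q w" for a w y
  proof -
    have "S a (w(0:=y)) = (\<Sum>i\<in>insert 0 I. ((w(0:=y)) i + (if i = 0 then a else 0))^2)"
      unfolding S_def eqK ..
    also have "\<dots> = (y + a)^2 + (\<Sum>i\<in>I. ((w(0:=y)) i + (if i = 0 then a else 0))^2)"
      using finI nI by (simp add: sum.insert)
    also have "(\<Sum>i\<in>I. ((w(0:=y)) i + (if i = 0 then a else 0))^2) = Q w"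
      unfolding Q_def using nI by (intro sum.cong) auto
    finally show ?thesis .
  qed
  have emA: "emeasure M (A a) = (\<integral>\<^sup>+ w. ennreal (hr a (c - Q w)) \<partial>MI)" for a
  proof -
    have "emeasure M (A a) = (\<integral>\<^sup>+ z. indicator (A a) z \<partial>M)"
      by (rule nn_integral_indicator[symmetric]) measurable
    also have "\<dots> = (\<integral>\<^sup>+ z. indicator {z. S a z \<le> c} z \<partial>M)"
      by (intro nn_integral_cong) (auto simp: A_def indicator_def)
    also have "\<dots> = (\<integral>\<^sup>+ z. indicator {z. S a z \<le> c} z \<partial>PiM (insert 0 I) (\<lambda>_. Nd))"
      unfolding M_def eqK ..
    also have "\<dots> = (\<integral>\<^sup>+ w. (\<integral>\<^sup>+ y. indicator {z. S a z \<le> c} (w(0 := y)) \<partial>Nd) \<partial>MI)"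
      unfolding MI_def
    proof (rule PS.product_nn_integral_insert[OF finI nI])
      have "(\<lambda>z. indicator {z. S a z \<le> c} z :: ennreal) \<in> borel_measurable M"
        by measurable
      thus "(\<lambda>z. indicator {z. S a z \<le> c} z :: ennreal) \<in> borel_measurable (PiM (insert 0 I) (\<lambda>_. Nd))"
        unfolding M_def eqK .
    qed
    also have "\<dots> = (\<integral>\<^sup>+ w. ennreal (hr a (c - Q w)) \<partial>MI)"
    proof (intro nn_integral_cong)
      fix w
      have "(\<integral>\<^sup>+ y. indicator {z. S a z \<le> c} (w(0 := y)) \<partial>Nd)
           = (\<integral>\<^sup>+ y. indicator {y. (y + a)^2 \<le> c - Q w} y \<partial>Nd)"
        by (intro nn_integral_cong) (simp add: indicator_def S_upd)
      also have "\<dots> = emeasure Nd {y. (y + a)^2 \<le> c - Q w}"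
        by (rule nn_integral_indicator) measurable
      also have "\<dots> = ennreal (hr a (c - Q w))"
        unfolding hr_def by (simp add: N.emeasure_eq_measure)
      finally show "(\<integral>\<^sup>+ y. indicator {z. S a z \<le> c} (w(0 := y)) \<partial>Nd) = ennreal (hr a (c - Q w))" .
    qed
    finally show ?thesis .
  qed
  have lt: "emeasure M (A a1) < emeasure M (A a2)"
    unfolding emA
  proof (rule nn_integral_less)
    show "(\<lambda>w. ennreal (hr a1 (c - Q w))) \<in> borel_measurable MI" by measurable
    show "(\<lambda>w. ennreal (hr a2 (c - Q w))) \<in> borel_measurable MI" by measurable
    show "(\<integral>\<^sup>+ w. ennreal (hr a1 (c - Q w)) \<partial>MI) \<noteq> \<infinity>"
      unfolding emA[symmetric] by simp
    show "AE w in MI. ennreal (hr a1 (c - Q w)) \<le> ennreal (hr a2 (c - Q w))"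
      using hr_le[OF a] by (auto intro!: ennreal_leI)
    show "\<not> (AE w in MI. ennreal (hr a2 (c - Q w)) \<le> ennreal (hr a1 (c - Q w)))"
    proof
      assume ae: "AE w in MI. ennreal (hr a2 (c - Q w)) \<le> ennreal (hr a1 (c - Q w))"
      have "AE w in MI. c - Q w \<le> 0"
        using ae
      proof (rule eventually_mono)
        fix w assume le: "ennreal (hr a2 (c - Q w)) \<le> ennreal (hr a1 (c - Q w))"
        show "c - Q w \<le> 0"
        proof (rule ccontr)
          assume "\<not> c - Q w \<le> 0"
          hence "hr a1 (c - Q w) < hr a2 (c - Q w)" using hr_strict[OF a] by simp
          moreover have "0 \<le> hr a1 (c - Q w)" unfolding hr_def by simp
          ultimately have "ennreal (hr a1 (c - Q w)) < ennreal (hr a2 (c - Q w))"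
            by (simp add: ennreal_lessI)
          with le show False by simp
        qed
      qed
      then obtain N0 where N0: "{w \<in> space MI. \<not> (c - Q w \<le> 0)} \<subseteq> N0" "emeasure MI N0 = 0" "N0 \<in> sets MI"
        by (rule AE_E) blast
      define \<delta> where "\<delta> = sqrt (c / (2 * K))"
      have \<delta>pos: "\<delta> > 0" using c K2 unfolding \<delta>_def by simp
      have \<delta>sq: "\<delta>^2 = c / (2 * K)" using c K2 unfolding \<delta>_def by simp
      define B where "B = PiE I (\<lambda>_. {-\<delta>..\<delta>})"
      have spMI: "space MI = PiE I (\<lambda>_. UNIV)" unfolding MI_def by (simp add: space_PiM)
      have "B \<subseteq> N0"
      proof
        fix w assume w: "w \<in> B"
        have "Q w \<le> of_nat (card I) * \<delta>^2"
          unfolding Q_def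
        proof (rule sum_bounded_above)
          fix i assume "i \<in> I"
          hence "w i \<in> {-\<delta>..\<delta>}" using w unfolding B_def by (auto simp: PiE_iff)
          hence "\<bar>w i\<bar> \<le> \<delta>" by (auto simp: abs_le_iff)
          hence "\<bar>w i\<bar>^2 \<le> \<delta>^2" by (rule power_mono) simp
          thus "(w i)^2 \<le> \<delta>^2" by simp
        qed
        also have "\<dots> = real (K - 1) * (c / (2 * K))" unfolding cardI \<delta>sq ..
        also have "\<dots> < c"
        proof -
          have "real (K - 1) < 2 * real K" using K2 by linarith
          hence "real (K - 1) * c < 2 * real K * c" using c by simp
          thus ?thesis using K2 c by (simp add: field_simps)
        qed
        finally have "\<not> (c - Q w \<le> 0)" by simp
        moreover have "w \<in> space MI" using w unfolding spMI B_def by auto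
        ultimately show "w \<in> N0" using N0(1) by auto
      qed
      hence "emeasure MI B \<le> emeasure MI N0" by (rule emeasure_mono) (use N0 in auto)
      also have "\<dots> = 0" using N0 by auto
      finally have B0: "emeasure MI B = 0" by simp
      have "emeasure MI B = (\<Prod>i\<in>I. emeasure Nd {-\<delta>..\<delta>})"
        unfolding MI_def B_def by (rule PS.emeasure_PiM[OF finI]) simp
      also have "emeasure Nd {-\<delta>..\<delta>} = ennreal (Fn \<delta> 0)"
        unfolding Fn_def using Nd_interval[of "-\<delta>" \<delta>] \<delta>pos by simp
      finally have "emeasure MI B = ennreal (Fn \<delta> 0) ^ card I" by simp
      moreover have "Fn \<delta> 0 > 0"
      proof -
        have "Fn \<delta> 1 < Fn \<delta> 0" by (rule Fn_strict) (use \<delta>pos in auto)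
        moreover have "Fn \<delta> 1 \<ge> 0" unfolding Fn_def
          by (auto intro!: integral_nonneg integrable_continuous_real phi_cont)
        ultimately show ?thesis by simp
      qed
      ultimately have "emeasure MI B > 0" using ennreal_power[of "Fn \<delta> 0" "card I"] by simp
      with B0 show False by simp
    qed
  qed
  have compl: "{z \<in> space M. c < S a z} = space M - A a" for a
    unfolding A_def by auto
  have "measure M (A a1) < measure M (A a2)"
    using lt by (simp add: PM.emeasure_eq_measure ennreal_less_iff)
  hence "1 - measure M (A a2) < 1 - measure M (A a1)" by simp
  hence "measure M {z \<in> space M. c < S a2 z} < measure M {z \<in> space M. c < S a1 z}"
    unfolding compl by (simp add: PM.prob_compl)
  thus ?thesis unfolding S_def .
qed




lemma cs_mulv:
  "(cs_cov s r :: real^'k^'k) *v v = (\<chi> i. s * ((1 - r) * v$i + r * (\<Sum>j\<in>UNIV. v$j)))"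
proof -
  have "(\<Sum>j\<in>UNIV. s * ((1 - r) * (if i = j then 1 else 0) + r) * v$j)
        = (\<Sum>j\<in>UNIV. s * (1 - r) * (if i = j then v$j else 0) + s * r * v$j)" for i :: 'k
    by (intro sum.cong) (auto simp: algebra_simps)
  also have "\<dots> i = s * (1 - r) * (\<Sum>j\<in>UNIV. if i = j then v$j else 0) + s * r * (\<Sum>j\<in>UNIV. v$j)" for i
    by (simp only: sum.distrib sum_distrib_left[symmetric])
  also have "\<dots> i = s * ((1 - r) * v$i + r * (\<Sum>j\<in>UNIV. v$j))" for i
    by (simp add: algebra_simps)
  finally show ?thesis
    unfolding cs_cov_def matrix_vector_mult_def by (simp add: vec_eq_iff)
qed

lemma inner_cs: "x \<bullet> ((cs_cov s r :: real^'k^'k) *v x) = s * ((1 - r) * (x \<bullet> x) + r * (\<Sum>j\<in>UNIV. x$j)^2)"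
proof -
  have "x \<bullet> ((cs_cov s r :: real^'k^'k) *v x) = (\<Sum>i\<in>UNIV. x$i * (s * ((1 - r) * x$i + r * (\<Sum>j\<in>UNIV. x$j))))"
    unfolding cs_mulv inner_vec_def by simp
  also have "\<dots> = (\<Sum>i\<in>UNIV. s * (1 - r) * (x$i * x$i) + s * r * (\<Sum>j\<in>UNIV. x$j) * x$i)"
    by (intro sum.cong) (auto simp: algebra_simps)
  also have "\<dots> = s * (1 - r) * (\<Sum>i\<in>UNIV. x$i * x$i) + s * r * (\<Sum>j\<in>UNIV. x$j) * (\<Sum>i\<in>UNIV. x$i)"
    by (simp only: sum.distrib sum_distrib_left[symmetric])
  also have "(\<Sum>i\<in>UNIV. x$i * x$i) = x \<bullet> x" by (simp add: inner_vec_def)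
  also have "s * (1 - r) * (x \<bullet> x) + s * r * (\<Sum>j\<in>UNIV. x$j) * (\<Sum>i\<in>UNIV. x$i) = s * ((1 - r) * (x \<bullet> x) + r * (\<Sum>j\<in>UNIV. x$j)^2)"
    by (simp add: power2_eq_square algebra_simps)
  finally show ?thesis .
qed

lemma rho_lt1:
  assumes "CARD('k) \<ge> 2" "s > 0" "pos_def_mat (cs_cov s r :: real^'k^'k)"
  shows "r < 1"
proof -
  obtain i j :: 'k where ij: "i \<noteq> j"
    using assms(1) by (metis card_2_iff' card_le_Suc_iff numeral_2_eq_2 ex_in_conv card.empty le_zero_eq zero_neq_numeral)
  define x :: "real^'k" where "x = axis i 1 - axis j 1"
  have x0: "x \<noteq> 0" using ij unfolding x_def by (auto simp: vec_eq_iff axis_def)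
  have sx: "(\<Sum>k\<in>UNIV. x$k) = 0"
    unfolding x_def using ij by (simp add: axis_def sum_subtractf sum.delta sum.delta')
  have "x \<bullet> ((cs_cov s r :: real^'k^'k) *v x) > 0" using assms(3) x0 unfolding pos_def_mat_def by auto
  hence "s * ((1 - r) * (x \<bullet> x)) > 0" unfolding inner_cs sx by simp
  moreover have "x \<bullet> x > 0" using x0 by simp
  ultimately have "(1 - r) * (x \<bullet> x) > 0" using assms(2) by (simp add: zero_less_mult_iff)
  hence "1 - r > 0" using \<open>x \<bullet> x > 0\<close> by (simp add: zero_less_mult_iff)
  thus ?thesis by simp
qed

lemma cs_inv_apply:
  assumes "pos_def_mat (A :: real^'k^'k)"
  shows "matrix_inv A *v (A *v v) = v"
proof -
  have "\<forall>x. A *v x = 0 \<longrightarrow> x = 0"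
  proof (intro allI impI)
    fix x assume "A *v x = 0"
    thus "x = 0" using assms unfolding pos_def_mat_def by (metis inner_zero_right less_irrefl)
  qed
  hence "invertible A" by (simp add: invertible_left_inverse matrix_left_invertible_ker)
  hence "\<exists>A'. A ** A' = mat 1 \<and> A' ** A = mat 1" unfolding invertible_def .
  hence "A ** matrix_inv A = mat 1 \<and> matrix_inv A ** A = mat 1"
    unfolding matrix_inv_def by (rule someI_ex)
  thus ?thesis by (simp add: matrix_vector_mul_assoc)
qed

lemma ncp_formula:
  fixes S :: "'k::finite set"
  assumes "s > 0" "0 < r" "r < 1" "pos_def_mat (cs_cov s r :: real^'k^'k)"
  defines "K \<equiv> real CARD('k)" and "u \<equiv> real (card S)"
  shows "manova_ncp sxx (cs_cov s r :: real^'k^'k) (\<chi> k. if k \<in> S then b else 0)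
         = sxx * b * u * (b / (s * (1 - r))) * (1 + (K - 1 - u) * r) / (1 + (K - 1) * r)"
proof -
  define D where "D = 1 + (K - 1) * r"
  have K1: "K \<ge> 1" unfolding K_def by simp
  have Dpos: "D > 0" unfolding D_def using K1 assms by (smt (verit) mult_nonneg_nonneg)
  define \<alpha> where "\<alpha> = b / (s * (1 - r))"
  define \<gamma> where "\<gamma> = - r * \<alpha> * u / D"
  define v :: "real^'k" where "v = (\<chi> k. (if k \<in> S then \<alpha> else 0) + \<gamma>)"
  have sv: "(\<Sum>j\<in>UNIV. v$j) = \<alpha> * u + \<gamma> * K"
    unfolding v_def u_def K_def by (simp add: sum.distrib sum.If_cases)
  have "(cs_cov s r :: real^'k^'k) *v v = (\<chi> k. if k \<in> S then b else 0)"
  proof -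
    have "s * ((1 - r) * v$i + r * (\<alpha> * u + \<gamma> * K)) = (if i \<in> S then b else 0)" for i
    proof -
      have "\<gamma> * D = - r * \<alpha> * u" unfolding \<gamma>_def using Dpos by simp
      have e1: "(1 - r) * \<gamma> + r * (\<alpha> * u + \<gamma> * K) = \<gamma> * D + r * \<alpha> * u"
        unfolding D_def by (simp only: algebra_simps)
      have e: "(1 - r) * \<gamma> + r * (\<alpha> * u + \<gamma> * K) = 0" using e1 \<open>\<gamma> * D = - r * \<alpha> * u\<close> by linarith
      have "s * ((1 - r) * v$i + r * (\<alpha> * u + \<gamma> * K)) = s * (1 - r) * (if i \<in> S then \<alpha> else 0) + s * ((1 - r) * \<gamma> + r * (\<alpha> * u + \<gamma> * K))"
        unfolding v_def by (simp add: algebra_simps)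
      also have "\<dots> = s * (1 - r) * (if i \<in> S then \<alpha> else 0)" using e by simp
      also have "\<dots> = (if i \<in> S then b else 0)" unfolding \<alpha>_def using assms by auto
      finally show ?thesis .
    qed
    thus ?thesis unfolding cs_mulv sv by (simp add: vec_eq_iff)
  qed
  hence mi: "matrix_inv (cs_cov s r :: real^'k^'k) *v (\<chi> k. if k \<in> S then b else 0) = v"
    using cs_inv_apply[OF assms(4)] by metis
  have "(\<chi> k. if k \<in> S then b else 0) \<bullet> v = (\<Sum>k\<in>UNIV. (if k \<in> S then b * (\<alpha> + \<gamma>) else 0))"
    unfolding v_def inner_vec_def by (intro sum.cong) auto
  also have "\<dots> = b * (\<alpha> + \<gamma>) * u" unfolding u_def by (simp add: sum.If_cases)
  also have "\<dots> = b * u * \<alpha> * (1 + (K - 1 - u) * r) / D"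
    unfolding \<gamma>_def D_def using Dpos unfolding D_def by (simp add: field_simps)
  finally show ?thesis unfolding manova_ncp_def mi D_def \<alpha>_def by simp
qed


lemma tail_eq:
  "ncchisq_tail K lam c = measure (PiM {..<K} (\<lambda>_. Nd))
     {z \<in> space (PiM {..<K} (\<lambda>_. Nd)). c < (\<Sum>i<K. (z i + (if i = 0 then sqrt lam else 0))^2)}"
  unfolding ncchisq_tail_def Nd_def Let_def by simp

theorem theorem1:
  fixes sigma2 rho b sxx c :: real
    and S :: "'k::finite set"
  assumes "CARD('k) \<ge> 2"
    and "sigma2 > 0" and "rho > 0"
    and "pos_def_mat (cs_cov sigma2 rho :: real^'k^'k)"
    and "b > 0"
    and "sxx > 0"
    and "c > 0"
    and "card S < CARD('k)"
    and "real (card S) / real CARD('k) >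
           (1 - rho) / (1 + (real CARD('k) - real (card S) - 1) * rho)"
  shows "manova_asym_power sxx (cs_cov sigma2 rho :: real^'k^'k)
             (\<chi> k. if k \<in> S then b else 0) c
         > manova_asym_power sxx (cs_cov sigma2 rho :: real^'k^'k) (\<chi> k. b) c"
proof -
  note K2 = assms(1)
  have r1: "rho < 1" by (rule rho_lt1[OF assms(1,2,4)])
  define K where "K = real CARD('k)"
  define u where "u = real (card S)"
  define D where "D = 1 + (K - 1) * rho"
  define P where "P = sxx * b * (b / (sigma2 * (1 - rho))) / D"
  have K2': "K \<ge> 2" unfolding K_def using K2 by simp
  have uK: "u < K" unfolding u_def K_def using assms(8) by simp
  have u0: "u \<ge> 0" unfolding u_def by simp
  have Dpos: "D > 0" unfolding D_def using K2' assms(3) by (simp add: add_pos_nonneg)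
  have Ppos: "P > 0" unfolding P_def using assms r1 Dpos by simp
  have lp: "manova_ncp sxx (cs_cov sigma2 rho :: real^'k^'k) (\<chi> k. if k \<in> S then b else 0)
        = P * (u * (1 + (K - 1 - u) * rho))"
    unfolding ncp_formula[OF assms(2,3) r1 assms(4)] P_def D_def K_def u_def by simp
  have "manova_ncp sxx (cs_cov sigma2 rho :: real^'k^'k) (\<chi> k. b)
      = manova_ncp sxx (cs_cov sigma2 rho :: real^'k^'k) (\<chi> k. if k \<in> (UNIV::'k set) then b else 0)"
    by simp
  also have "\<dots> = P * (K * (1 + (K - 1 - K) * rho))"
    unfolding ncp_formula[OF assms(2,3) r1 assms(4)] P_def D_def K_def by simp
  finally have lc: "manova_ncp sxx (cs_cov sigma2 rho :: real^'k^'k) (\<chi> k. b) = P * (K * (1 - rho))"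
    by (simp add: algebra_simps)
  have "card S + 1 \<le> CARD('k)" using assms(8) by simp
  hence "real (card S + 1) \<le> real CARD('k)" by (rule of_nat_mono)
  hence uK1: "K - u - 1 \<ge> 0" unfolding K_def u_def by simp
  have den: "1 + (K - u - 1) * rho > 0" using uK1 assms(3) by (simp add: add_pos_nonneg)
  have hyp: "u / K > (1 - rho) / (1 + (K - u - 1) * rho)" using assms(9) unfolding K_def u_def .
  hence "u * (1 + (K - u - 1) * rho) > K * (1 - rho)"
    using den K2' by (simp add: divide_less_eq less_divide_eq field_simps)
  hence "u * (1 + (K - 1 - u) * rho) > K * (1 - rho)" by (simp add: algebra_simps)
  hence lt: "P * (K * (1 - rho)) < P * (u * (1 + (K - 1 - u) * rho))"
    using Ppos by simp
  have lc0: "0 \<le> P * (K * (1 - rho))" using Ppos K2' r1 by simp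
  have a: "0 \<le> sqrt (P * (K * (1 - rho)))" "sqrt (P * (K * (1 - rho))) < sqrt (P * (u * (1 + (K - 1 - u) * rho)))"
    using lc0 lt by (auto simp: real_sqrt_less_iff)
  show ?thesis
    unfolding manova_asym_power_def lp lc tail_eq
    by (rule main_prob[OF K2 assms(7) a])
qed

end
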